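(* Let $H$ be a graph on $n$ vertices and let $G=K_{1}\vee H$, where $V(K_1)=\{u\}$. Then $\uparrow^{2}G$ has Laplacian perfect state transfer at time $\frac{\pi}{2}$ between $(0,u)$ and $(1,u)$ if and only if $n$ is odd.
   Context: All graphs are simple, undirected and unweighted. The join $K_1\vee H$ is obtained from $H$ by adding a new vertex $u$ adjacent to all vertices of $H$. The blow-up $\uparrow^{2}G$ has vertex set $\mathbb{Z}_2\times V(G)$, with $(l,a)\sim(m,b)$ iff $a\sim b$ in $G$. A graph with Laplacian $L=D-A$ has Laplacian perfect state transfer between $a,b$ at time $\tau$ if $\exp(i\tau L)\mathbf{e}_a=\gamma\mathbf{e}_b$ for some $\gamma\in\mathbb{C}$. *)

theory Defs
  imports "HOL-Analysis.Analysis"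
begin

definition simple_graph :: "'a set \<Rightarrow> ('a \<Rightarrow> 'a \<Rightarrow> bool) \<Rightarrow> bool" where
  "simple_graph V E \<longleftrightarrow> finite V \<and> (\<forall>x\<in>V. \<forall>y\<in>V. E x y \<longleftrightarrow> E y x) \<and> (\<forall>x\<in>V. \<not> E x x)"

text \<open>Join with K_1: the new vertex u is None, old vertices are Some v.\<close>
definition join_verts :: "'a set \<Rightarrow> 'a option set" where
  "join_verts V = insert None (Some ` V)"

fun join_adj :: "('a \<Rightarrow> 'a \<Rightarrow> bool) \<Rightarrow> 'a option \<Rightarrow> 'a option \<Rightarrow> bool" where
  "join_adj E None None = False"
| "join_adj E None (Some b) = True"
| "join_adj E (Some a) None = True"
| "join_adj E (Some a) (Some b) = E a b"

text \<open>Blow-up by 2: vertex set Z_2 x V, with Z_2 represented as {0,1::nat}.\<close>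
definition blowup_verts :: "'a set \<Rightarrow> (nat \<times> 'a) set" where
  "blowup_verts V = {0, 1} \<times> V"

definition blowup_adj :: "('a \<Rightarrow> 'a \<Rightarrow> bool) \<Rightarrow> nat \<times> 'a \<Rightarrow> nat \<times> 'a \<Rightarrow> bool" where
  "blowup_adj E p q \<longleftrightarrow> E (snd p) (snd q)"

definition degree :: "'a set \<Rightarrow> ('a \<Rightarrow> 'a \<Rightarrow> bool) \<Rightarrow> 'a \<Rightarrow> nat" where
  "degree V E x = card {y \<in> V. E x y}"

definition laplacian :: "'a set \<Rightarrow> ('a \<Rightarrow> 'a \<Rightarrow> bool) \<Rightarrow> ('a \<Rightarrow> complex) \<Rightarrow> ('a \<Rightarrow> complex)" where
  "laplacian V E f = (\<lambda>x. of_nat (degree V E x) * f x - (\<Sum>y\<in>{y \<in> V. E x y}. f y))"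

definition basis_vec :: "'a \<Rightarrow> 'a \<Rightarrow> complex" where
  "basis_vec a = (\<lambda>x. if x = a then 1 else 0)"

definition lap_exp_apply :: "'a set \<Rightarrow> ('a \<Rightarrow> 'a \<Rightarrow> bool) \<Rightarrow> real \<Rightarrow> 'a \<Rightarrow> 'a \<Rightarrow> complex" where
  "lap_exp_apply V E t a x =
     (\<Sum>k. (\<i> * of_real t) ^ k / of_nat (fact k) * ((laplacian V E ^^ k) (basis_vec a)) x)"

definition laplacian_pst :: "'a set \<Rightarrow> ('a \<Rightarrow> 'a \<Rightarrow> bool) \<Rightarrow> 'a \<Rightarrow> 'a \<Rightarrow> real \<Rightarrow> bool" where
  "laplacian_pst V E a b t \<longleftrightarrow>
     (\<exists>\<gamma>::complex. \<forall>x\<in>V. lap_exp_apply V E t a x = \<gamma> * basis_vec b x)"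

end

theory Submission
  imports Defs
begin

definition vf :: "complex \<Rightarrow> complex \<Rightarrow> complex \<Rightarrow> nat \<times> 'a option \<Rightarrow> complex" where
  "vf a b c x = (case snd x of None \<Rightarrow> (if fst x = 0 then a else b) | Some _ \<Rightarrow> c)"

lemma set_None:
  "{y \<in> blowup_verts (join_verts V). blowup_adj (join_adj E) (l, None) y} = {0,1} \<times> (Some ` V)"
  unfolding blowup_verts_def join_verts_def blowup_adj_def
  by (auto elim: join_adj.elims)

lemma set_Some:
  "{y \<in> blowup_verts (join_verts V). blowup_adj (join_adj E) (l, Some v) y}
     = {(0,None),(1,None)} \<union> ({0,1} \<times> (Some ` {b\<in>V. E v b}))"
  unfolding blowup_verts_def join_verts_def blowup_adj_def
  by (auto elim: join_adj.elims)

lemma lap_vf: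
  assumes fin: "finite V" and x: "x \<in> blowup_verts (join_verts V)"
  shows "laplacian (blowup_verts (join_verts V)) (blowup_adj (join_adj E)) (vf a b c) x
       = vf (2 * of_nat (card V) * (a - c)) (2 * of_nat (card V) * (b - c)) (2*c - a - b) x"
proof -
  obtain l w where xe: "x = (l, w)" and l: "l \<in> {0,1}"
    using x unfolding blowup_verts_def by auto
  show ?thesis
  proof (cases w)
    case None
    have c1: "card ({0::nat,Suc 0} \<times> (Some ` V)) = 2 * card V"
      by (simp add: card_cartesian_product card_image)
    have s1: "(\<Sum>y\<in>{0::nat,1} \<times> (Some ` V). vf a b c y) = (\<Sum>y\<in>{0::nat,1} \<times> (Some ` V). c)"
      by (rule sum.cong) (auto simp: vf_def)
    show ?thesis using l
      unfolding laplacian_def degree_def xe None set_None s1 c1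
      by (auto simp: vf_def c1 algebra_simps)
  next
    case (Some v)
    let ?S = "{b\<in>V. E v b}"
    have fS: "finite ?S" using fin by auto
    have d: "{(0::nat,None),(1,None)} \<inter> ({0,1} \<times> (Some ` ?S)) = {}" by auto
    have c1: "card ({0::nat,1} \<times> (Some ` ?S)) = 2 * card ?S"
      by (simp add: card_cartesian_product card_image)
    have s1: "(\<Sum>y\<in>{0::nat,Suc 0} \<times> (Some ` ?S). vf a b c y) = (\<Sum>y\<in>{0::nat,Suc 0} \<times> (Some ` ?S). c)"
      by (rule sum.cong) (auto simp: vf_def)
    have cu: "card ({(0::nat,None),(1,None)} \<union> ({0,1} \<times> (Some ` ?S))) = 2 + 2 * card ?S"
      using fS d by (subst card_Un_disjoint) (auto simp: c1 card_image)
    have s2: "(\<Sum>y\<in>{0::nat,1} \<times> (Some ` ?S). vf a b c y) = of_nat (2 * card ?S) * c"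
      using s1 by (simp add: card_cartesian_product card_image)
    have s3: "(\<Sum>y\<in>{(0::nat,None),(1,None)}. vf a b c y) = a + b"
      by (simp add: vf_def)
    have su: "(\<Sum>y\<in>{(0::nat,None),(1,None)} \<union> ({0,1} \<times> (Some ` ?S)). vf a b c y)
        = a + b + of_nat (2 * card ?S) * c"
      using fS d by (subst sum.union_disjoint) (simp_all only: s2 s3 finite_insert finite.emptyI finite_cartesian_product finite_imageI)
    show ?thesis
      unfolding laplacian_def degree_def xe Some set_Some cu su
      by (simp add: vf_def algebra_simps)
  qed
qed

lemma lap_cong:
  assumes "\<forall>y\<in>V. f y = g y" "x \<in> V"
  shows "laplacian V E f x = laplacian V E g x"
  using assms unfolding laplacian_def by (auto intro!: sum.cong)

definition ak :: "complex \<Rightarrow> complex \<Rightarrow> nat \<Rightarrow> complex" where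
  "ak n r k = (1/2) * (2*n)^k + (n*r) * (2*n+2)^k + r * 0^k"
definition bk :: "complex \<Rightarrow> complex \<Rightarrow> nat \<Rightarrow> complex" where
  "bk n r k = (-1/2) * (2*n)^k + (n*r) * (2*n+2)^k + r * 0^k"
definition ck :: "complex \<Rightarrow> complex \<Rightarrow> nat \<Rightarrow> complex" where
  "ck n r k = 0 * (2*n)^k + (-r) * (2*n+2)^k + r * 0^k"

lemma rec_a: "2 * N * (ak N r k - ck N r k) = ak N r (Suc k)"
  unfolding ak_def ck_def by (simp add: algebra_simps)

lemma rec_b: "2 * N * (bk N r k - ck N r k) = bk N r (Suc k)"
  unfolding bk_def ck_def by (simp add: algebra_simps)

lemma rec_c: "2 * ck N r k - ak N r k - bk N r k = ck N r (Suc k)"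
  unfolding ak_def bk_def ck_def by (simp add: algebra_simps)

lemma powers:
  assumes fin: "finite V" and x: "x \<in> blowup_verts (join_verts V)"
    and h: "r * (2 * of_nat (card V) + 2) = (1::complex)"
  shows "((laplacian (blowup_verts (join_verts V)) (blowup_adj (join_adj E)) ^^ k)
            (basis_vec (0, None))) x
       = vf (ak (of_nat (card V)) r k) (bk (of_nat (card V)) r k) (ck (of_nat (card V)) r k) x"
  using x
proof (induction k arbitrary: x)
  case 0
  have "ak (of_nat (card V)) r 0 = 1" "bk (of_nat (card V)) r 0 = 0" "ck (of_nat (card V)) r 0 = 0"
  proof -
    have e: "2*(r + r * of_nat (card V)) = 1" using h by (simp add: algebra_simps)
    have e2: "r + r * of_nat (card V) = 1/2" using e by (simp add: field_simps)
    have e3: "r * of_nat (card V) = 1/2 - r" using e2 by (simp add: algebra_simps)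
    then show "ak (of_nat (card V)) r 0 = 1" "bk (of_nat (card V)) r 0 = 0" "ck (of_nat (card V)) r 0 = 0"
      unfolding ak_def bk_def ck_def by (simp_all add: e3 mult.commute[of _ r])
  qed
  then show ?case using 0
    by (auto simp: basis_vec_def vf_def blowup_verts_def split: option.splits)
next
  case (Suc k)
  let ?N = "of_nat (card V) :: complex"
  have "((laplacian (blowup_verts (join_verts V)) (blowup_adj (join_adj E)) ^^ Suc k)
            (basis_vec (0, None))) x
     = laplacian (blowup_verts (join_verts V)) (blowup_adj (join_adj E))
         (vf (ak ?N r k) (bk ?N r k) (ck ?N r k)) x"
    using Suc by (simp add: lap_cong)
  also have "\<dots> = vf (ak ?N r (Suc k)) (bk ?N r (Suc k)) (ck ?N r (Suc k)) x"
    unfolding lap_vf[OF fin Suc.prems] rec_a rec_b rec_c ..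
  finally show ?case .
qed

lemma sums3:
  fixes z A B C l1 l2 l3 :: complex
  shows "(\<lambda>k. z^k / of_nat (fact k) * (A*l1^k + B*l2^k + C*l3^k)) sums
           (A*exp(z*l1) + B*exp(z*l2) + C*exp(z*l3))"
proof -
  have g: "(\<lambda>k. A * ((z*l)^k /\<^sub>R fact k)) sums (A * exp (z*l))" for A l :: complex
    by (rule sums_mult[OF exp_converges])
  have "(\<lambda>k. A * ((z*l1)^k /\<^sub>R fact k) + B * ((z*l2)^k /\<^sub>R fact k) + C * ((z*l3)^k /\<^sub>R fact k))
      sums (A*exp(z*l1) + B*exp(z*l2) + C*exp(z*l3))"
    by (intro sums_add g)
  moreover have "(\<lambda>k. A * ((z*l1)^k /\<^sub>R fact k) + B * ((z*l2)^k /\<^sub>R fact k) + C * ((z*l3)^k /\<^sub>R fact k))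
     = (\<lambda>k. z^k / of_nat (fact k) * (A*l1^k + B*l2^k + C*l3^k))"
    by (rule ext) (simp add: scaleR_conv_of_real power_mult_distrib field_simps)
  ultimately show ?thesis by simp
qed

lemma exp_half_pi:
  "exp (\<i> * complex_of_real (pi/2) * (2 * of_nat m)) = (-1) ^ m"
proof -
  have "\<i> * complex_of_real (pi/2) * (2 * of_nat m) = of_nat m * (\<i> * of_real pi)"
    by (simp add: field_simps)
  then show ?thesis by (simp only: exp_of_nat_mult exp_pi_i')
qed

theorem corollary10:
  fixes V :: "'a set" and E :: "'a \<Rightarrow> 'a \<Rightarrow> bool"
  assumes "simple_graph V E"
  shows "laplacian_pst (blowup_verts (join_verts V)) (blowup_adj (join_adj E))
           (0, None) (1, None) (pi / 2)
         \<longleftrightarrow> odd (card V)"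
proof -
  let ?V = "blowup_verts (join_verts V)"
  let ?E = "blowup_adj (join_adj E)"
  define N where "N = (of_nat (card V) :: complex)"
  have fin: "finite V" using assms by (simp add: simple_graph_def)
  define r where "r = 1 / (2*N+2)"
  have nz: "2*N+2 \<noteq> 0"
  proof -
    have "2*N+2 = of_nat (2 * card V + 2)" by (simp add: N_def)
    also have "\<dots> \<noteq> 0" by (simp only: of_nat_eq_0_iff)
    finally show ?thesis .
  qed
  have h: "r * (2 * of_nat (card V) + 2) = 1" using nz by (simp add: r_def N_def)
  have rN: "N * r = 1/2 - r"
  proof -
    have "2*(r + r * N) = 1" using h by (simp add: algebra_simps N_def)
    then have "r + r * N = 1/2" by (simp add: field_simps)
    then show ?thesis by (simp add: algebra_simps)
  qed
  have rnz: "r \<noteq> 0" using h by auto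
  define sg where "sg = ((-1)::complex) ^ card V"
  define z where "z = \<i> * complex_of_real (pi/2)"
  have e1: "exp (z * (2*N)) = sg" unfolding z_def sg_def N_def by (rule exp_half_pi)
  have e2: "exp (z * (2*N+2)) = - sg"
  proof -
    have "2*N+2 = 2 * of_nat (Suc (card V))" by (simp add: N_def)
    then show ?thesis unfolding z_def sg_def using exp_half_pi[of "Suc (card V)"] by (simp add: add.commute)
  qed
  have val: "lap_exp_apply ?V ?E (pi/2) (0,None) x = vf (r*(1+sg)) (r*(1+sg) - sg) (r*(1+sg)) x"
    if x: "x \<in> ?V" for x
  proof -
    have P: "((laplacian ?V ?E ^^ k) (basis_vec (0, None))) x = vf (ak N r k) (bk N r k) (ck N r k) x" for k
      using powers[OF fin x h] by (simp add: N_def)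
    have L: "lap_exp_apply ?V ?E (pi/2) (0,None) x
        = (\<Sum>k. z^k / of_nat (fact k) * vf (ak N r k) (bk N r k) (ck N r k) x)"
      unfolding lap_exp_apply_def z_def P ..
    obtain l w where xe: "x = (l, w)" and l: "l = 0 \<or> l = 1"
      using x unfolding blowup_verts_def by auto
    show ?thesis
    proof (cases w)
      case None
      show ?thesis
      proof (cases "l = 0")
        case True
        have "(\<lambda>k. z^k / of_nat (fact k) * vf (ak N r k) (bk N r k) (ck N r k) x)
             = (\<lambda>k. z^k / of_nat (fact k) * ((1/2)*(2*N)^k + (N*r)*(2*N+2)^k + r*0^k))"
          by (simp add: xe None True vf_def ak_def)
        moreover have "(\<lambda>k. z^k / of_nat (fact k) * ((1/2)*(2*N)^k + (N*r)*(2*N+2)^k + r*0^k))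
            sums ((1/2)*exp(z*(2*N)) + (N*r)*exp(z*(2*N+2)) + r*exp(z*0))" by (rule sums3)
        ultimately have "lap_exp_apply ?V ?E (pi/2) (0,None) x = (1/2)* sg + (1/2 - r)*(-sg) + r"
          unfolding L e1 e2 rN by (simp add: sums_iff)
        then show ?thesis by (simp add: xe None True vf_def algebra_simps)
      next
        case False
        have "(\<lambda>k. z^k / of_nat (fact k) * vf (ak N r k) (bk N r k) (ck N r k) x)
             = (\<lambda>k. z^k / of_nat (fact k) * ((-1/2)*(2*N)^k + (N*r)*(2*N+2)^k + r*0^k))"
          by (simp add: xe None False vf_def bk_def)
        moreover have "(\<lambda>k. z^k / of_nat (fact k) * ((-1/2)*(2*N)^k + (N*r)*(2*N+2)^k + r*0^k))
            sums ((-1/2)*exp(z*(2*N)) + (N*r)*exp(z*(2*N+2)) + r*exp(z*0))" by (rule sums3)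
        ultimately have "lap_exp_apply ?V ?E (pi/2) (0,None) x = (-1/2)* sg + (1/2 - r)*(-sg) + r"
          unfolding L e1 e2 rN by (simp add: sums_iff)
        then show ?thesis by (simp add: xe None False vf_def algebra_simps)
      qed
    next
      case (Some v)
      have "(\<lambda>k. z^k / of_nat (fact k) * vf (ak N r k) (bk N r k) (ck N r k) x)
           = (\<lambda>k. z^k / of_nat (fact k) * (0*(2*N)^k + (-r)*(2*N+2)^k + r*0^k))"
        by (simp add: xe Some vf_def ck_def)
      moreover have "(\<lambda>k. z^k / of_nat (fact k) * (0*(2*N)^k + (-r)*(2*N+2)^k + r*0^k))
          sums (0*exp(z*(2*N)) + (-r)*exp(z*(2*N+2)) + r*exp(z*0))" by (rule sums3)
      ultimately have "lap_exp_apply ?V ?E (pi/2) (0,None) x = (-r)*(-sg) + r"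
        unfolding L e1 e2 by (simp add: sums_iff)
      then show ?thesis by (simp add: xe Some vf_def algebra_simps)
    qed
  qed
  have x0: "(0::nat, None) \<in> ?V" by (simp add: blowup_verts_def join_verts_def)
  show ?thesis
  proof
    assume "laplacian_pst ?V ?E (0, None) (1, None) (pi / 2)"
    then obtain g where g: "\<forall>x\<in>?V. lap_exp_apply ?V ?E (pi/2) (0,None) x = g * basis_vec (1, None) x"
      unfolding laplacian_pst_def by blast
    have "r*(1+sg) = 0" using g[rule_format, OF x0] val[OF x0] by (simp add: vf_def basis_vec_def)
    then have "sg = -1" using rnz by (simp add: add_eq_0_iff)
    then show "odd (card V)" unfolding sg_def by (metis neg_one_even_power one_neq_neg_one)
  next
    assume o: "odd (card V)"
    then have s1: "sg = -1" by (simp add: sg_def)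
    show "laplacian_pst ?V ?E (0, None) (1, None) (pi / 2)"
      unfolding laplacian_pst_def
    proof (intro exI[of _ 1] ballI)
      fix x assume x: "x \<in> ?V"
      then obtain l w where xe: "x = (l, w)" and l: "l = 0 \<or> l = 1"
        unfolding blowup_verts_def by auto
      show "lap_exp_apply ?V ?E (pi/2) (0,None) x = 1 * basis_vec (1, None) x"
        unfolding val[OF x] s1 using l
        by (cases w) (auto simp: xe vf_def basis_vec_def)
    qed
  qed
qed

end
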